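(* Let $(A,m)$ be a strict $A_\infty$-algebra over a field $\mathbf{F}$, and let $m=\sum_{k\ge1}m_k\in\prod_{k}C^{k,2-k}(A,A)$. Then the class of $m$ in the Hochschild cohomology vanishes: $[m]=0\in \mathrm{HH}^2(A,A)$, i.e. there exists a cochain $a$ of total degree $1$ with $D(a)=[m,a]=m$.
   Context: A strict $A_\infty$-algebra $(A,m)$ over $\mathbf{F}$ is a $\mathbf{Z}$-graded vector space $A=\bigoplus_{k\in\mathbf{Z}}A^k$ with graded linear maps $m_n:A^{\otimes n}\to A$ ($n\ge1$) of degree $2-n$ satisfying, for every $n\ge1$, $\sum_{n=r+s+t}(-1)^{rs+t}m_{r+1+t}(\mathbf{I}^{\otimes r}\otimes m_s\otimes \mathbf{I}^{\otimes t})=0$ (with $r,t\ge0$, $s\ge1$), where tensor products of graded maps are evaluated with the Koszul sign rule $(f\otimes g)(x\otimes y)=(-1)^{|g||x|}f(x)\otimes g(y)$. Let $C^{n,k}(A,A)=\mathrm{Hom}^k(A^{\otimes n},A)=\prod_i\mathrm{Hom}((A^{\otimes n})^i,A^{i+k})$ (with $A^{\otimes 0}=\mathbf{F}$, so $C^{0,k}\cong A^k$); its total degree is $n+k$. For $f\in C^{n,k}$, $g\in C^{m,l}$ the Gerstenhaber bracket $[f,g]\in C^{n+m-1,k+l}$ is $[f,g]=\sum_{i=0}^{n-1}(-1)^{\delta_1}f(\mathbf{I}^{\otimes i}\otimes g\otimes \mathbf{I}^{\otimes n-i-1})-(-1)^{(n+k-1)(m+l-1)}\sum_{i=0}^{m-1}(-1)^{\delta_2}g(\mathbf{I}^{\otimes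 i}\otimes f\otimes\mathbf{I}^{\otimes m-i-1})$, where $\delta_1=(n-1)(m-1)+(n-1)l+i(m-1)$, $\delta_2=(m-1)(n-1)+(m-1)k+i(n-1)$, and an empty sum is $0$; it is extended bilinearly to products of such spaces. Since $m_k\in C^{k,2-k}$, $m$ has total degree $2$, $[m,m]=0$, and $D=[m,-]$ is a differential on $\prod C^{*,*}(A,A)$. The Hochschild cohomology is $\mathrm{HH}^*(A,A)=H^*(\prod_iC^{i,*-i}(A,A),D)$. *)

theory Defs
  imports Complex_Main
begin

text \<open>
A Z-graded vector space A = (direct sum over k of A^k) over a field 'f is given by a
scalar multiplication scale on an ambient type 'v together with a family V k of subspaces;
A is the EXTERNAL direct sum of the V k, so a homogeneous element is a pair
(degree k, vector in V k).  A linear map (A^{tensor n})^i -> A^{i+k} is the same thing as a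
family, indexed by degree tuples (i1,...,in) with i1+...+in = i, of multilinear maps
V i1 x ... x V in -> V (i+k).  Hence a cochain in C^{n,k}(A,A) is represented by a function
taking a list ds of n degrees and a list xs of n vectors (xs!j in V (ds!j)); only its values on
such homogeneous arguments matter.
\<close>

type_synonym 'v cochain = "int list \<Rightarrow> 'v list \<Rightarrow> 'v"

definition ksgn :: "int \<Rightarrow> 'f::field" where
  "ksgn e = (if even e then 1 else -1)"

definition homog_args :: "(int \<Rightarrow> 'v set) \<Rightarrow> int list \<Rightarrow> 'v list \<Rightarrow> bool" where
  "homog_args V ds xs \<longleftrightarrow> length xs = length ds \<and> (\<forall>j<length ds. xs ! j \<in> V (ds ! j))"

definition is_cochain ::
  "('f::field \<Rightarrow> 'v::ab_group_add \<Rightarrow> 'v) \<Rightarrow> (int \<Rightarrow> 'v set) \<Rightarrow> nat \<Rightarrow> int \<Rightarrow> 'v cochain \<Rightarrow> bool" where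
  "is_cochain scale V n k f \<longleftrightarrow>
     (\<forall>ds xs. length ds = n \<and> homog_args V ds xs \<longrightarrow> f ds xs \<in> V (sum_list ds + k)) \<and>
     (\<forall>ds xs j y a b. length ds = n \<and> homog_args V ds xs \<and> j < n \<and> y \<in> V (ds ! j) \<longrightarrow>
        f ds (xs[j := scale a (xs ! j) + scale b y]) = scale a (f ds xs) + scale b (f ds (xs[j := y])))"

definition cochain_eq :: "(int \<Rightarrow> 'v set) \<Rightarrow> nat \<Rightarrow> 'v cochain \<Rightarrow> 'v cochain \<Rightarrow> bool" where
  "cochain_eq V n f g \<longleftrightarrow> (\<forall>ds xs. length ds = n \<and> homog_args V ds xs \<longrightarrow> f ds xs = g ds xs)"

text \<open>f (I^{tensor i} tensor g tensor I^{tensor rest}) evaluated with the Koszul sign rule,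
  where g has arity m and degree l (as a graded map).\<close>
definition ins ::
  "('f::field \<Rightarrow> 'v::ab_group_add \<Rightarrow> 'v) \<Rightarrow> 'v cochain \<Rightarrow> nat \<Rightarrow> nat \<Rightarrow> int \<Rightarrow> 'v cochain \<Rightarrow> 'v cochain" where
  "ins scale f i m l g = (\<lambda>ds xs.
     scale (ksgn (l * sum_list (take i ds)))
       (f (take i ds @ [sum_list (take m (drop i ds)) + l] @ drop (i + m) ds)
          (take i xs @ [g (take m (drop i ds)) (take m (drop i xs))] @ drop (i + m) xs)))"

definition gbr ::
  "('f::field \<Rightarrow> 'v::ab_group_add \<Rightarrow> 'v) \<Rightarrow> nat \<Rightarrow> int \<Rightarrow> 'v cochain \<Rightarrow> nat \<Rightarrow> int \<Rightarrow> 'v cochain \<Rightarrow> 'v cochain" where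
  "gbr scale n k f m l g = (\<lambda>ds xs.
     (\<Sum>i<n. scale (ksgn ((int n - 1) * (int m - 1) + (int n - 1) * l + int i * (int m - 1)))
                (ins scale f i m l g ds xs))
   - scale (ksgn ((int n + k - 1) * (int m + l - 1)))
       (\<Sum>i<m. scale (ksgn ((int m - 1) * (int n - 1) + (int m - 1) * k + int i * (int n - 1)))
                (ins scale g i n k f ds xs)))"

definition is_tot_cochain ::
  "('f::field \<Rightarrow> 'v::ab_group_add \<Rightarrow> 'v) \<Rightarrow> (int \<Rightarrow> 'v set) \<Rightarrow> int \<Rightarrow> (nat \<Rightarrow> 'v cochain) \<Rightarrow> bool" where
  "is_tot_cochain scale V d F \<longleftrightarrow> (\<forall>n. is_cochain scale V n (d - int n) (F n))"

definition tot_eq :: "(int \<Rightarrow> 'v set) \<Rightarrow> (nat \<Rightarrow> 'v cochain) \<Rightarrow> (nat \<Rightarrow> 'v cochain) \<Rightarrow> bool" where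
  "tot_eq V F G \<longleftrightarrow> (\<forall>n. cochain_eq V n (F n) (G n))"

text \<open>Bilinear extension of the bracket to total cochains F (total degree d), G (total degree e):
  the arity-N component collects [F_n, G_m] with n + m - 1 = N.\<close>
definition tbr ::
  "('f::field \<Rightarrow> 'v::ab_group_add \<Rightarrow> 'v) \<Rightarrow> int \<Rightarrow> (nat \<Rightarrow> 'v cochain) \<Rightarrow> int \<Rightarrow> (nat \<Rightarrow> 'v cochain)
     \<Rightarrow> nat \<Rightarrow> 'v cochain" where
  "tbr scale d F e G N = (\<lambda>ds xs.
     \<Sum>n\<in>{0..N+1}. gbr scale n (d - int n) (F n) (N + 1 - n) (e - int (N + 1 - n)) (G (N + 1 - n)) ds xs)"

definition strict_ainf ::
  "('f::field \<Rightarrow> 'v::ab_group_add \<Rightarrow> 'v) \<Rightarrow> (int \<Rightarrow> 'v set) \<Rightarrow> (nat \<Rightarrow> 'v cochain) \<Rightarrow> bool" where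
  "strict_ainf scale V m \<longleftrightarrow>
     vector_space scale \<and> (\<forall>k. 0 \<in> V k \<and> (\<forall>x\<in>V k. \<forall>y\<in>V k. x + y \<in> V k) \<and> (\<forall>c. \<forall>x\<in>V k. scale c x \<in> V k)) \<and>
     (\<forall>n\<ge>1. is_cochain scale V n (2 - int n) (m n)) \<and>
     (\<forall>n\<ge>1. \<forall>ds xs. length ds = n \<and> homog_args V ds xs \<longrightarrow>
        (\<Sum>s\<in>{1..n}. \<Sum>r\<in>{0..n - s}.
           scale (ksgn (int r * int s + int (n - r - s)))
             (ins scale (m (r + 1 + (n - r - s))) r s (2 - int s) (m s) ds xs)) = 0)"

definition ainf_tot :: "(nat \<Rightarrow> 'v::zero cochain) \<Rightarrow> nat \<Rightarrow> 'v cochain" where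
  "ainf_tot m = (\<lambda>n. if n = 0 then (\<lambda>_ _. 0) else m n)"

end

theory Submission
  imports Defs
begin

lemma homog_list_all2: "homog_args V ds xs \<longleftrightarrow> list_all2 (\<lambda>d x. x \<in> V d) ds xs"
  unfolding homog_args_def list_all2_conv_all_nth by auto

lemma homog_ins0:
  assumes "homog_args V ds xs" "0 \<in> V d"
  shows "homog_args V (take i ds @ [d] @ drop j ds) (take i xs @ [0] @ drop j xs)"
  using assms unfolding homog_list_all2
  by (intro list_all2_appendI) (auto simp: list_all2_takeI list_all2_dropI)

lemma cochain_zero_slot:
  assumes vs: "vector_space scale" and c: "is_cochain scale V n k f"
    and h: "homog_args V ds xs" and l: "length ds = n" and j: "j < n" and z: "xs ! j = 0"
  shows "f ds xs = 0"
proof -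
  interpret vector_space scale by (rule vs)
  have y: "xs ! j \<in> V (ds ! j)" using h j l unfolding homog_args_def by auto
  have "f ds (xs[j := scale 0 (xs ! j) + scale 0 (xs ! j)]) = scale 0 (f ds xs) + scale 0 (f ds (xs[j := xs ! j]))"
    using c h l j y unfolding is_cochain_def by blast
  then have "f ds (xs[j := xs ! j]) = 0" using z by simp
  then show ?thesis by simp
qed

lemma cochain_scale_slot:
  assumes vs: "vector_space scale" and c: "is_cochain scale V n k f"
    and h: "homog_args V ds xs" and l: "length ds = n" and j: "j < n"
  shows "f ds (xs[j := scale a (xs ! j)]) = scale a (f ds xs)"
proof -
  interpret vector_space scale by (rule vs)
  have y: "xs ! j \<in> V (ds ! j)" using h j l unfolding homog_args_def by auto
  have "f ds (xs[j := scale a (xs ! j) + scale 0 (xs ! j)]) = scale a (f ds xs) + scale 0 (f ds (xs[j := xs ! j]))"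
    using c h l j y unfolding is_cochain_def by blast
  then show ?thesis by simp
qed

theorem theorem1p9:
  fixes scale :: "'f::field \<Rightarrow> 'v::ab_group_add \<Rightarrow> 'v"
    and V :: "int \<Rightarrow> 'v set"
    and m :: "nat \<Rightarrow> 'v cochain"
  assumes "strict_ainf scale V m"
  shows "\<exists>a. is_tot_cochain scale V 1 a \<and>
             tot_eq V (tbr scale 2 (ainf_tot m) 1 a) (ainf_tot m)"
proof -
  have vs: "vector_space scale" and V0: "\<And>k. 0 \<in> V k"
    and Vs: "\<And>k c x. x \<in> V k \<Longrightarrow> scale c x \<in> V k"
    and mc: "\<And>n. n \<ge> 1 \<Longrightarrow> is_cochain scale V n (2 - int n) (m n)"
    using assms unfolding strict_ainf_def by auto
  interpret vector_space scale by (rule vs)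
  define a1 :: "'v cochain" where "a1 = (\<lambda>ds xs. scale (1 - of_int (hd ds)) (hd xs))"
  define a :: "nat \<Rightarrow> 'v cochain" where "a = (\<lambda>k. if k = 1 then a1 else (\<lambda>_ _. 0))"
  define M where "M = ainf_tot m"
  have Mc: "\<And>n. n \<ge> 1 \<Longrightarrow> is_cochain scale V n (2 - int n) (M n)"
    using mc by (simp add: M_def ainf_tot_def)
  have M0: "M 0 = (\<lambda>_ _. 0)" by (simp add: M_def ainf_tot_def)
  have tc: "is_tot_cochain scale V 1 a"
    unfolding is_tot_cochain_def
  proof
    fix n
    show "is_cochain scale V n (1 - int n) (a n)"
    proof (cases "n = 1")
      case True
      show ?thesis unfolding True a_def is_cochain_def homog_args_def a1_def
      proof (intro conjI allI impI, goal_cases)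
        case (1 ds xs)
        then show ?case using Vs by (cases ds; cases xs) auto
      next
        case (2 ds xs j y c b)
        then show ?case by (cases ds; cases xs) (auto simp: scale_right_distrib mult.commute)
      qed
    next
      case False
      then show ?thesis unfolding a_def is_cochain_def using V0 by simp
    qed
  qed
  have main: "cochain_eq V N (tbr scale 2 M 1 a N) (M N)" for N
    unfolding cochain_eq_def
  proof (intro allI impI)
    fix ds xs assume dx: "length ds = N \<and> homog_args V ds xs"
    hence l: "length ds = N" and h: "homog_args V ds xs" by auto
    have lx: "length xs = N" using h l unfolding homog_args_def by auto
    have van: "gbr scale n (2 - int n) (M n) (N + 1 - n) (1 - int (N + 1 - n)) (a (N + 1 - n)) ds xs = 0"
      if nN: "n \<le> N + 1" "N + 1 - n \<noteq> 1" for n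
    proof -
      have aa: "a (N + 1 - n) = (\<lambda>_ _. 0)" using that by (simp add: a_def)
      have f0: "ins scale (M n) i (N + 1 - n) (1 - int (N + 1 - n)) (a (N + 1 - n)) ds xs = 0" if "i < n" for i
      proof -
        have n1: "n \<ge> 1" using that by auto
        have le: "i + (N + 1 - n) \<le> N" using that \<open>n \<le> N + 1\<close> by auto
        let ?ds = "take i ds @ [sum_list (take (N + 1 - n) (drop i ds)) + (1 - int (N + 1 - n))] @ drop (i + (N + 1 - n)) ds"
        let ?xs = "take i xs @ [0] @ drop (i + (N + 1 - n)) xs"
        have "M n ?ds ?xs = 0"
          apply (rule cochain_zero_slot[OF vs Mc[OF n1] homog_ins0[OF h V0], of i])
          using l lx le that nN by (auto simp: nth_append)
        then show ?thesis unfolding ins_def aa by simp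
      qed
      have f1: "ins scale (a (N + 1 - n)) i n (2 - int n) (M n) ds xs = 0" for i
        unfolding ins_def aa by simp
      show ?thesis unfolding gbr_def using f0 f1 by simp
    qed
    show "tbr scale 2 M 1 a N ds xs = M N ds xs"
    proof (cases "N = 0")
      case True
      have "tbr scale 2 M 1 a N ds xs = 0"
      proof -
        have v: "gbr scale 1 (2 - int 1) (M 1) (N + 1 - 1) (1 - int (N + 1 - 1)) (a (N + 1 - 1)) ds xs = 0"
          by (rule van) (simp_all add: True)
        have v0: "gbr scale 0 (2 - int 0) (M 0) (N + 1 - 0) (1 - int (N + 1 - 0)) (a (N + 1 - 0)) ds xs = 0"
          by (simp add: gbr_def ins_def M0 a_def a1_def True)
        have "{0..N+1} = {0, 1::nat}" using True by auto
        then show ?thesis unfolding tbr_def using v v0 by simp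
      qed
      then show ?thesis using True by (simp add: M0)
    next
      case False
      hence N1: "N \<ge> 1" by auto
      have "tbr scale 2 M 1 a N ds xs =
         gbr scale N (2 - int N) (M N) 1 0 a1 ds xs +
         (\<Sum>n\<in>{0..N+1} - {N}. gbr scale n (2 - int n) (M n) (N + 1 - n) (1 - int (N + 1 - n)) (a (N + 1 - n)) ds xs)"
        unfolding tbr_def by (subst sum.remove[of _ N]) (auto simp: a_def)
      also have "(\<Sum>n\<in>{0..N+1} - {N}. gbr scale n (2 - int n) (M n) (N + 1 - n) (1 - int (N + 1 - n)) (a (N + 1 - n)) ds xs) = 0"
      proof (rule sum.neutral, rule ballI)
        fix n assume "n \<in> {0..N+1} - {N}"
        then show "gbr scale n (2 - int n) (M n) (N + 1 - n) (1 - int (N + 1 - n)) (a (N + 1 - n)) ds xs = 0"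
          by (intro van) auto
      qed
      also have "gbr scale N (2 - int N) (M N) 1 0 a1 ds xs = M N ds xs"
      proof -
        have t1: "ins scale (M N) i 1 0 a1 ds xs = scale (1 - of_int (ds ! i)) (M N ds xs)" if "i < N" for i
        proof -
          have d1: "drop i ds = ds ! i # drop (Suc i) ds" using that l by (simp add: Cons_nth_drop_Suc)
          have x1: "drop i xs = xs ! i # drop (Suc i) xs" using that lx by (simp add: Cons_nth_drop_Suc)
          have "ins scale (M N) i 1 0 a1 ds xs = M N ds (xs[i := scale (1 - of_int (ds ! i)) (xs ! i)])"
            unfolding ins_def a1_def using that l lx
            by (simp add: d1 x1 upd_conv_take_nth_drop ksgn_def flip: id_take_nth_drop)
          also have "\<dots> = scale (1 - of_int (ds ! i)) (M N ds xs)"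
            by (rule cochain_scale_slot[OF vs Mc[OF N1] h l that])
          finally show ?thesis .
        qed
        have t2: "ins scale a1 0 N (2 - int N) (M N) ds xs = scale (1 - (of_int (sum_list ds) + 2 - of_int N)) (M N ds xs)"
          unfolding ins_def a1_def using l lx by (simp add: ksgn_def)
        have s1: "(\<Sum>i<N. scale (ksgn ((int N - 1) * (int 1 - 1) + (int N - 1) * 0 + int i * (int 1 - 1))) (ins scale (M N) i 1 0 a1 ds xs))
             = scale (\<Sum>i<N. (1 - of_int (ds ! i))) (M N ds xs)"
          unfolding scale_sum_left
        proof (rule sum.cong[OF refl])
          fix i assume "i \<in> {..<N}"
          then show "scale (ksgn ((int N - 1) * (int 1 - 1) + (int N - 1) * 0 + int i * (int 1 - 1))) (ins scale (M N) i 1 0 a1 ds xs) = scale (1 - of_int (ds ! i)) (M N ds xs)"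
            using t1[of i] by (simp add: ksgn_def)
        qed
        have s3: "(\<Sum>i<N. (1 - of_int (ds ! i)) :: 'f) = of_nat N - of_int (sum_list ds)"
          using l by (simp add: sum_subtractf sum_list_sum_nth atLeast0LessThan)
        have s2: "(\<Sum>i<1. scale (ksgn ((int 1 - 1) * (int N - 1) + (int 1 - 1) * (2 - int N) + int i * (int N - 1)))
                  (ins scale a1 i N (2 - int N) (M N) ds xs)) = scale (1 - (of_int (sum_list ds) + 2 - of_int N)) (M N ds xs)"
          using t2 by (simp add: ksgn_def)
        have sg: "ksgn ((int N + (2 - int N) - 1) * (int 1 + 0 - 1)) = (1::'f)" by (simp add: ksgn_def)
        have "gbr scale N (2 - int N) (M N) 1 0 a1 ds xs
           = scale (of_nat N - of_int (sum_list ds)) (M N ds xs) - scale (1 - (of_int (sum_list ds) + 2 - of_int N)) (M N ds xs)"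
          unfolding gbr_def s1 s3 s2 sg by simp
        also have "\<dots> = scale ((of_nat N - of_int (sum_list ds)) - (1 - (of_int (sum_list ds) + 2 - of_int N))) (M N ds xs)"
          by (rule scale_left_diff_distrib[symmetric])
        also have "(of_nat N - of_int (sum_list ds)) - (1 - (of_int (sum_list ds) + 2 - of_int N)) = (1::'f)"
          by simp
        finally show ?thesis by simp
      qed
      finally show ?thesis by simp
    qed
  qed
  show ?thesis
    using tc main unfolding tot_eq_def M_def by blast
qed

end
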